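(* Let $\mu^s$ be a positive policy. Then: (a) for every $x\in\mathcal X$, $\kappa(\mu^s|x)=\max_{a\in\mathcal A(x)}\frac{1}{\mu^s(a|x)}\Big(1+\sum_{x'\text{ directly follows }(x,a)}\kappa(\mu^s|x')\Big)$; (b) $\kappa(\mu^s)=\sum_{x\in\mathcal X_1}\kappa(\mu^s|x)$; (c) for every $x\in\mathcal X$, $\kappa(\mu^s|x)\ge A^\tau(x)$, with equality for all $x$ simultaneously when $\mu^s=\mu^\star$, the balanced policy defined by $\mu^\star(a|x)=A^\tau(x,a)/A^\tau(x)$; (d) $\kappa(\mu^\star)=A_{\mathcal X}$.
   Context: Game structure. Fix $H\ge1$. The min-player's information sets form a finite set $\mathcal X$; each $x$ has a depth $h(x)\in\{1,\dots,H\}$ and a finite nonempty action set $\mathcal A(x)$; $\mathcal X_1$ is the set of depth-1 information sets. Perfect recall: every $x$ of depth $h$ has a unique history $(x_1,a_1,\dots,x_{h-1},a_{h-1},x_h=x)$ with $x_i$ of depth $i$, $a_i\in\mathcal A(x_i)$, and histories extend each other along the tree. $x'$ directly follows $(x,a)$ if $h(x')=h(x)+1$ and the history of $x'$ contains $x$ followed by $a$; $x$ is in the history of $x'$ if $x=x'_i$ for some $i$ (including $x=x'$); $(x,a)$ is in the history of $x'$ if $x$ is in the history of $x'$, $x\neq x'$, and the history of $x'$ contains $x$ followed by $a$. $A_{\mathcal X}=\sum_x|\mathcal A(x)|$. A policy is $\mu=(\mu(\cdot|x))_x$, $\mu(\cdot|x)\in\Delta_{\mathcal A(x)}$; $\Pi_{\min}$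 the set of policies; positive if all $\mu(a|x)>0$. Realization plan: $\mu_{1:}(x,a)=\prod_{i=1}^h\mu(a_i|x_i)$ (with $a_h=a$). For $x$ of depth $h$ and $(x',a')$ with $x$ in the history of $x'$ ($x'$ of depth $h'$, history $(x'_1,a'_1,\dots,x'_{h'})$, $a'_{h'}=a'$): $\mu_{h:}(x',a')=\prod_{i=h}^{h'}\mu(a'_i|x'_i)$. Define $\kappa(\mu^s)=\max_{\mu\in\Pi_{\min}}\sum_{x,a}\mu_{1:}(x,a)/\mu^s_{1:}(x,a)$ and, for $x$ of depth $h$, $\kappa(\mu^s|x)=\max_{\mu\in\Pi_{\min}}\sum_{x':\,x\text{ in history of }x'}\sum_{a'\in\mathcal A(x')}\mu_{h:}(x',a')/\mu^s_{h:}(x',a')$. Subtree action counts: $A^\tau(x,a)=1+\sum_{x':\,(x,a)\text{ in history of }x'}|\mathcal A(x')|$ and $A^\tau(x)=\sum_{a\in\mathcal A(x)}A^\tau(x,a)$. *)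

theory Defs
  imports Complex_Main
begin

text \<open>Tree (perfect-recall) structure of the min-player's information sets.
  X: information sets; h: depth; A: action sets; par x = None for depth-1 sets,
  par x = Some (y, b) if the history of x ends with ... y, b, x.
  The history of x is then the chain obtained by iterating par.\<close>

definition game_structure ::
  "'x set \<Rightarrow> nat \<Rightarrow> ('x \<Rightarrow> nat) \<Rightarrow> ('x \<Rightarrow> 'a set) \<Rightarrow> ('x \<Rightarrow> ('x \<times> 'a) option) \<Rightarrow> bool" where
  "game_structure X H h A par \<longleftrightarrow>
     H \<ge> 1 \<and> finite X \<and>
     (\<forall>x\<in>X. finite (A x) \<and> A x \<noteq> {} \<and> 1 \<le> h x \<and> h x \<le> H \<and>
        (h x = 1 \<longleftrightarrow> par x = None) \<and>
        (\<forall>y b. par x = Some (y, b) \<longrightarrow> y \<in> X \<and> b \<in> A y \<and> h x = h y + 1))"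

inductive in_hist :: "('x \<Rightarrow> ('x \<times> 'a) option) \<Rightarrow> 'x \<Rightarrow> 'x \<Rightarrow> bool" for par where
  refl: "in_hist par x x"
| step: "par x' = Some (y, b) \<Longrightarrow> in_hist par x y \<Longrightarrow> in_hist par x x'"

inductive act_hist :: "('x \<Rightarrow> ('x \<times> 'a) option) \<Rightarrow> 'x \<Rightarrow> 'a \<Rightarrow> 'x \<Rightarrow> bool" for par where
  direct: "par x' = Some (x, a) \<Longrightarrow> act_hist par x a x'"
| step: "par x' = Some (y, b) \<Longrightarrow> act_hist par x a y \<Longrightarrow> act_hist par x a x'"

definition directly_follows :: "('x \<Rightarrow> ('x \<times> 'a) option) \<Rightarrow> 'x \<Rightarrow> 'x \<Rightarrow> 'a \<Rightarrow> bool" where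
  "directly_follows par x' x a \<longleftrightarrow> par x' = Some (x, a)"

definition is_policy :: "'x set \<Rightarrow> ('x \<Rightarrow> 'a set) \<Rightarrow> ('x \<Rightarrow> 'a \<Rightarrow> real) \<Rightarrow> bool" where
  "is_policy X A \<mu> \<longleftrightarrow> (\<forall>x\<in>X. (\<forall>a\<in>A x. \<mu> x a \<ge> 0) \<and> (\<Sum>a\<in>A x. \<mu> x a) = 1)"

definition positive_policy :: "'x set \<Rightarrow> ('x \<Rightarrow> 'a set) \<Rightarrow> ('x \<Rightarrow> 'a \<Rightarrow> real) \<Rightarrow> bool" where
  "positive_policy X A \<mu> \<longleftrightarrow> is_policy X A \<mu> \<and> (\<forall>x\<in>X. \<forall>a\<in>A x. \<mu> x a > 0)"

definition real_plan :: "('x \<Rightarrow> ('x \<times> 'a) option) \<Rightarrow> ('x \<Rightarrow> 'a \<Rightarrow> real) \<Rightarrow> 'x \<Rightarrow> 'a \<Rightarrow> real" where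
  "real_plan par \<mu> x a = \<mu> x a * (\<Prod>(y, b)\<in>{(y, b). act_hist par y b x}. \<mu> y b)"

definition real_plan_from :: "('x \<Rightarrow> ('x \<times> 'a) option) \<Rightarrow> ('x \<Rightarrow> 'a \<Rightarrow> real) \<Rightarrow> 'x \<Rightarrow> 'x \<Rightarrow> 'a \<Rightarrow> real" where
  "real_plan_from par \<mu> x x' a' =
     \<mu> x' a' * (\<Prod>(y, b)\<in>{(y, b). act_hist par y b x' \<and> in_hist par x y}. \<mu> y b)"

definition kappa :: "'x set \<Rightarrow> ('x \<Rightarrow> 'a set) \<Rightarrow> ('x \<Rightarrow> ('x \<times> 'a) option) \<Rightarrow> ('x \<Rightarrow> 'a \<Rightarrow> real) \<Rightarrow> real" where
  "kappa X A par \<mu>s = (SUP \<mu>\<in>{\<mu>. is_policy X A \<mu>}.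
      \<Sum>x\<in>X. \<Sum>a\<in>A x. real_plan par \<mu> x a / real_plan par \<mu>s x a)"

definition kappa_at :: "'x set \<Rightarrow> ('x \<Rightarrow> 'a set) \<Rightarrow> ('x \<Rightarrow> ('x \<times> 'a) option) \<Rightarrow> ('x \<Rightarrow> 'a \<Rightarrow> real) \<Rightarrow> 'x \<Rightarrow> real" where
  "kappa_at X A par \<mu>s x = (SUP \<mu>\<in>{\<mu>. is_policy X A \<mu>}.
      \<Sum>x'\<in>{x'\<in>X. in_hist par x x'}. \<Sum>a'\<in>A x'.
         real_plan_from par \<mu> x x' a' / real_plan_from par \<mu>s x x' a')"

definition A_tau_act :: "'x set \<Rightarrow> ('x \<Rightarrow> 'a set) \<Rightarrow> ('x \<Rightarrow> ('x \<times> 'a) option) \<Rightarrow> 'x \<Rightarrow> 'a \<Rightarrow> nat" where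
  "A_tau_act X A par x a = 1 + (\<Sum>x'\<in>{x'\<in>X. act_hist par x a x'}. card (A x'))"

definition A_tau :: "'x set \<Rightarrow> ('x \<Rightarrow> 'a set) \<Rightarrow> ('x \<Rightarrow> ('x \<times> 'a) option) \<Rightarrow> 'x \<Rightarrow> nat" where
  "A_tau X A par x = (\<Sum>a\<in>A x. A_tau_act X A par x a)"

definition balanced_policy :: "'x set \<Rightarrow> ('x \<Rightarrow> 'a set) \<Rightarrow> ('x \<Rightarrow> ('x \<times> 'a) option) \<Rightarrow> 'x \<Rightarrow> 'a \<Rightarrow> real" where
  "balanced_policy X A par x a = real (A_tau_act X A par x a) / real (A_tau X A par x)"

definition total_actions :: "'x set \<Rightarrow> ('x \<Rightarrow> 'a set) \<Rightarrow> nat" where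
  "total_actions X A = (\<Sum>x\<in>X. card (A x))"

end

theory Submission imports Defs begin

locale gs =
  fixes X :: "'x set" and H :: nat and h :: "'x \<Rightarrow> nat" and A :: "'x \<Rightarrow> 'a set"
    and par :: "'x \<Rightarrow> ('x \<times> 'a) option"
  assumes G: "game_structure X H h A par"
begin

lemma finX: "finite X" using G by (simp add: game_structure_def)
lemma finA: "x \<in> X \<Longrightarrow> finite (A x)" using G by (simp add: game_structure_def)
lemma neA: "x \<in> X \<Longrightarrow> A x \<noteq> {}" using G by (simp add: game_structure_def)
lemma hge: "x \<in> X \<Longrightarrow> 1 \<le> h x" using G by (simp add: game_structure_def)
lemma hle: "x \<in> X \<Longrightarrow> h x \<le> H" using G by (simp add: game_structure_def)
lemma h1: "x \<in> X \<Longrightarrow> h x = 1 \<longleftrightarrow> par x = None" using G by (simp add: game_structure_def)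
lemma parD: "x \<in> X \<Longrightarrow> par x = Some (y, b) \<Longrightarrow> y \<in> X \<and> b \<in> A y \<and> h x = h y + 1"
  using G unfolding game_structure_def by blast

lemma in_hist_X: "in_hist par c x \<Longrightarrow> x \<in> X \<Longrightarrow> c \<in> X \<and> h c \<le> h x \<and> (h c = h x \<longrightarrow> c = x)"
proof (induction rule: in_hist.induct)
  case (refl x) then show ?case by simp
next
  case (step x' y b x)
  then show ?case using parD[OF step.prems step.hyps(1)] by auto
qed

lemma in_hist_trans: "in_hist par b c \<Longrightarrow> in_hist par a b \<Longrightarrow> in_hist par a c"
  by (induction rule: in_hist.induct) (auto intro: in_hist.step)

lemma in_hist_par: "par c = Some (x, a) \<Longrightarrow> in_hist par x c"
  by (rule in_hist.step[OF _ in_hist.refl])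

lemma act_hist_iff: "act_hist par x a x' \<longleftrightarrow> (\<exists>c. par c = Some (x, a) \<and> in_hist par c x')"
proof
  assume "act_hist par x a x'" then show "\<exists>c. par c = Some (x, a) \<and> in_hist par c x'"
    by (induction rule: act_hist.induct) (auto intro: in_hist.intros)
next
  assume "\<exists>c. par c = Some (x, a) \<and> in_hist par c x'"
  then obtain c where c: "par c = Some (x, a)" "in_hist par c x'" by blast
  from c(2) c(1) show "act_hist par x a x'"
    by (induction rule: in_hist.induct) (auto intro: act_hist.intros)
qed

lemma in_hist_cases: "in_hist par x x' \<Longrightarrow> x = x' \<or> (\<exists>a. act_hist par x a x')"
  by (induction rule: in_hist.induct) (auto intro: act_hist.intros)

lemma anc_unique: "in_hist par c x' \<Longrightarrow> x' \<in> X \<Longrightarrow> in_hist par d x' \<Longrightarrow> h c = h d \<Longrightarrow> c = d"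
proof (induction arbitrary: d rule: in_hist.induct)
  case (refl x) then show ?case using in_hist_X by force
next
  case (step x' y b c)
  have y: "y \<in> X" "h x' = h y + 1" using parD[OF step.prems(1) step.hyps(1)] by auto
  have hc: "h c \<le> h y" using in_hist_X[OF step.hyps(2) y(1)] by simp
  from step.prems(2) show ?case
  proof (cases rule: in_hist.cases)
    case refl then show ?thesis using y hc step.prems by simp
  next
    case (step y' b')
    then have "y' = y" using step.hyps(1) \<open>par x' = Some (y, b)\<close> by simp
    then show ?thesis using step.IH[OF y(1)] step(2) \<open>h c = h d\<close> local.step(2) by blast
  qed
qed

lemma act_hist_X: "act_hist par y b x' \<Longrightarrow> x' \<in> X \<Longrightarrow> y \<in> X \<and> b \<in> A y \<and> h y < h x'"
proof -
  assume a: "act_hist par y b x'" "x' \<in> X"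
  then obtain c where c: "par c = Some (y, b)" "in_hist par c x'" using act_hist_iff by blast
  have "c \<in> X" "h c \<le> h x'" using in_hist_X[OF c(2) a(2)] by auto
  then show ?thesis using parD[OF _ c(1)] by auto
qed

lemma act_unique: "act_hist par x a1 x' \<Longrightarrow> act_hist par x a2 x' \<Longrightarrow> x' \<in> X \<Longrightarrow> a1 = a2"
proof -
  assume a: "act_hist par x a1 x'" "act_hist par x a2 x'" "x' \<in> X"
  then obtain c1 c2 where c: "par c1 = Some (x, a1)" "in_hist par c1 x'"
     "par c2 = Some (x, a2)" "in_hist par c2 x'" using act_hist_iff by metis
  have "c1 \<in> X" "c2 \<in> X" using in_hist_X c a(3) by blast+
  then have "h c1 = h c2" using parD c by force
  then have "c1 = c2" using anc_unique c a(3) by blast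
  then show ?thesis using c by simp
qed

definition S where "S x = {x' \<in> X. in_hist par x x'}"
definition ch where "ch x a = {c \<in> X. par c = Some (x, a)}"

lemma finS: "finite (S x)" using finX by (simp add: S_def)
lemma finch: "finite (ch x a)" using finX by (simp add: ch_def)

lemma S_decomp: "x \<in> X \<Longrightarrow> S x = insert x (\<Union>a\<in>A x. \<Union>c\<in>ch x a. S c)"
proof (rule set_eqI, rule iffI)
  fix x' assume x: "x \<in> X" and "x' \<in> S x"
  then have x': "x' \<in> X" "in_hist par x x'" by (auto simp: S_def)
  from in_hist_cases[OF x'(2)] show "x' \<in> insert x (\<Union>a\<in>A x. \<Union>c\<in>ch x a. S c)"
  proof
    assume "\<exists>a. act_hist par x a x'"
    then obtain a c where c: "par c = Some (x, a)" "in_hist par c x'" using act_hist_iff by blast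
    have "c \<in> X" using in_hist_X[OF c(2) x'(1)] by simp
    then have "a \<in> A x" using parD[OF _ c(1)] by simp
    then show ?thesis using c x' \<open>c \<in> X\<close> by (auto simp: S_def ch_def)
  qed simp
next
  fix x' assume x: "x \<in> X" and "x' \<in> insert x (\<Union>a\<in>A x. \<Union>c\<in>ch x a. S c)"
  then consider "x' = x" | a c where "c \<in> ch x a" "x' \<in> S c" by blast
  then show "x' \<in> S x"
  proof cases
    case 1 then show ?thesis using x by (simp add: S_def in_hist.refl)
  next
    case 2
    then have 3: "in_hist par x c" "in_hist par c x'" "x' \<in> X" using in_hist_par by (auto simp: ch_def S_def)
    then show ?thesis using in_hist_trans[OF 3(2,1)] by (simp add: S_def)
  qed
qed

lemma S_disj: "c1 \<in> ch x a1 \<Longrightarrow> c2 \<in> ch x a2 \<Longrightarrow> S c1 \<inter> S c2 \<noteq> {} \<Longrightarrow> c1 = c2 \<and> a1 = a2"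
proof -
  assume a: "c1 \<in> ch x a1" "c2 \<in> ch x a2" "S c1 \<inter> S c2 \<noteq> {}"
  then obtain y where y: "y \<in> X" "in_hist par c1 y" "in_hist par c2 y" by (auto simp: S_def)
  have c: "c1 \<in> X" "par c1 = Some (x, a1)" "c2 \<in> X" "par c2 = Some (x, a2)" using a by (auto simp: ch_def)
  have "h c1 = h x + 1" using parD[OF c(1,2)] by simp
  moreover have "h c2 = h x + 1" using parD[OF c(3,4)] by simp
  ultimately have "h c1 = h c2" by simp
  then have "c1 = c2" using anc_unique y by blast
  then show ?thesis using a by (simp add: ch_def)
qed

lemma notin_S_ch: "c \<in> ch x a \<Longrightarrow> x \<notin> S c"
proof
  assume "c \<in> ch x a" "x \<in> S c"
  then have "c \<in> X" "par c = Some (x, a)" "x \<in> X" "in_hist par c x" by (auto simp: ch_def S_def)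
  then have 4: "c \<in> X" "par c = Some (x, a)" "x \<in> X" "in_hist par c x" .
  have "h c = h x + 1" using parD[OF 4(1,2)] by simp
  moreover have "h c \<le> h x" using in_hist_X[OF 4(4,3)] by simp
  ultimately show False by simp
qed

lemma sum_S: "x \<in> X \<Longrightarrow> (\<Sum>y\<in>S x. f y) = f x + (\<Sum>a\<in>A x. \<Sum>c\<in>ch x a. \<Sum>y\<in>S c. f y)"
proof -
  assume x: "x \<in> X"
  have inner: "(\<Sum>y\<in>(\<Union>c\<in>ch x a. S c). f y) = (\<Sum>c\<in>ch x a. \<Sum>y\<in>S c. f y)" for a
  proof (rule sum.UNION_disjoint)
    show "finite (ch x a)" by (rule finch)
    show "\<forall>c\<in>ch x a. finite (S c)" using finS by blast
    show "\<forall>i\<in>ch x a. \<forall>j\<in>ch x a. i \<noteq> j \<longrightarrow> S i \<inter> S j = {}" using S_disj by blast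
  qed
  have outer: "(\<Sum>y\<in>(\<Union>a\<in>A x. \<Union>c\<in>ch x a. S c). f y) = (\<Sum>a\<in>A x. \<Sum>y\<in>(\<Union>c\<in>ch x a. S c). f y)"
  proof (rule sum.UNION_disjoint)
    show "finite (A x)" by (rule finA[OF x])
    show "\<forall>a\<in>A x. finite (\<Union>c\<in>ch x a. S c)" using finS finch by blast
    show "\<forall>i\<in>A x. \<forall>j\<in>A x. i \<noteq> j \<longrightarrow> (\<Union>c\<in>ch x i. S c) \<inter> (\<Union>c\<in>ch x j. S c) = {}"
      using S_disj by blast
  qed
  have "x \<notin> (\<Union>a\<in>A x. \<Union>c\<in>ch x a. S c)" using notin_S_ch by blast
  then show ?thesis
    by (subst S_decomp[OF x], subst sum.insert) (use finch finS finA[OF x] outer inner in auto)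
qed


lemma ch_X: "c \<in> ch x a \<Longrightarrow> c \<in> X \<and> par c = Some (x, a)" by (simp add: ch_def)

lemma ch_h: "c \<in> ch x a \<Longrightarrow> x \<in> X \<and> a \<in> A x \<and> h c = h x + 1"
  using parD[of c x a] by (simp add: ch_def)

lemma act_hist_S: "{x' \<in> X. act_hist par x a x'} = (\<Union>c\<in>ch x a. S c)"
proof (rule set_eqI, rule iffI)
  fix x' assume "x' \<in> {x' \<in> X. act_hist par x a x'}"
  then have x': "x' \<in> X" "act_hist par x a x'" by auto
  then obtain c where c: "par c = Some (x, a)" "in_hist par c x'" using act_hist_iff by blast
  have "c \<in> X" using in_hist_X[OF c(2) x'(1)] by simp
  then show "x' \<in> (\<Union>c\<in>ch x a. S c)" using c x' by (auto simp: S_def ch_def)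
next
  fix x' assume "x' \<in> (\<Union>c\<in>ch x a. S c)"
  then obtain c where c: "c \<in> ch x a" "x' \<in> S c" by blast
  then have "par c = Some (x, a)" "in_hist par c x'" "x' \<in> X" by (auto simp: ch_def S_def)
  then show "x' \<in> {x' \<in> X. act_hist par x a x'}" using act_hist_iff by blast
qed

definition T where "T x = (\<Sum>y\<in>S x. card (A y))"

lemma A_tau_act_T: "A_tau_act X A par x a = 1 + (\<Sum>c\<in>ch x a. T c)"
proof -
  have "(\<Sum>y\<in>(\<Union>c\<in>ch x a. S c). card (A y)) = (\<Sum>c\<in>ch x a. \<Sum>y\<in>S c. card (A y))"
  proof (rule sum.UNION_disjoint)
    show "finite (ch x a)" by (rule finch)
    show "\<forall>c\<in>ch x a. finite (S c)" using finS by blast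
    show "\<forall>i\<in>ch x a. \<forall>j\<in>ch x a. i \<noteq> j \<longrightarrow> S i \<inter> S j = {}" using S_disj by blast
  qed
  then show ?thesis unfolding A_tau_act_def act_hist_S T_def by simp
qed

lemma A_tau_T: "x \<in> X \<Longrightarrow> A_tau X A par x = T x"
proof -
  assume x: "x \<in> X"
  have "T x = card (A x) + (\<Sum>a\<in>A x. \<Sum>c\<in>ch x a. T c)"
    unfolding T_def by (rule sum_S[OF x])
  also have "\<dots> = (\<Sum>a\<in>A x. 1 + (\<Sum>c\<in>ch x a. T c))"
    by (subst sum.distrib) simp
  also have "\<dots> = A_tau X A par x" unfolding A_tau_def A_tau_act_T ..
  finally show ?thesis by simp
qed

lemma A_tau_act_rec: "A_tau_act X A par x a = 1 + (\<Sum>c\<in>ch x a. A_tau X A par c)"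
  unfolding A_tau_act_T by (simp add: A_tau_T ch_X)

definition R where "R = {x \<in> X. h x = 1}"

lemma root_exists: "x' \<in> X \<Longrightarrow> \<exists>r. r \<in> R \<and> in_hist par r x'"
proof (induction "h x'" arbitrary: x' rule: less_induct)
  case less
  show ?case
  proof (cases "h x' = 1")
    case True then show ?thesis using less.prems in_hist.refl[of par x'] by (auto simp: R_def)
  next
    case False
    then obtain y b where p: "par x' = Some (y, b)" using h1[OF less.prems] by auto
    then have y: "y \<in> X" "h y < h x'" using parD[OF less.prems p] by auto
    then obtain r where r: "r \<in> R" "in_hist par r y" using less.hyps by blast
    then show ?thesis using in_hist.step[of par x' y b r, OF p r(2)] by blast
  qed
qed

lemma X_roots: "X = (\<Union>r\<in>R. S r)"
proof (rule set_eqI, rule iffI)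
  fix x assume "x \<in> X" then show "x \<in> (\<Union>r\<in>R. S r)" using root_exists by (auto simp: S_def)
qed (auto simp: S_def)

lemma roots_disj: "r1 \<in> R \<Longrightarrow> r2 \<in> R \<Longrightarrow> r1 \<noteq> r2 \<Longrightarrow> S r1 \<inter> S r2 = {}"
proof -
  assume r: "r1 \<in> R" "r2 \<in> R" "r1 \<noteq> r2"
  show ?thesis
  proof (rule ccontr)
    assume "S r1 \<inter> S r2 \<noteq> {}"
    then obtain y where y: "y \<in> X" "in_hist par r1 y" "in_hist par r2 y" by (auto simp: S_def)
    have "h r1 = h r2" using r by (simp add: R_def)
    then show False using anc_unique[OF y(2,1,3)] r(3) by simp
  qed
qed

lemma finR: "finite R" using finX by (simp add: R_def)

lemma sum_roots: "(\<Sum>x\<in>X. f x) = (\<Sum>r\<in>R. \<Sum>y\<in>S r. f y)"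
proof -
  have "(\<Sum>x\<in>(\<Union>r\<in>R. S r). f x) = (\<Sum>r\<in>R. \<Sum>y\<in>S r. f y)"
  proof (rule sum.UNION_disjoint)
    show "finite R" by (rule finR)
    show "\<forall>c\<in>R. finite (S c)" using finS by blast
    show "\<forall>i\<in>R. \<forall>j\<in>R. i \<noteq> j \<longrightarrow> S i \<inter> S j = {}" using roots_disj by blast
  qed
  then show ?thesis using X_roots by simp
qed

lemma total_T: "total_actions X A = (\<Sum>r\<in>R. A_tau X A par r)"
  unfolding total_actions_def sum_roots by (rule sum.cong) (auto simp: T_def A_tau_T R_def)

lemma fin_pairs: "x' \<in> X \<Longrightarrow> finite {(y, b). act_hist par y b x' \<and> P y b}"
proof -
  assume x': "x' \<in> X"
  have "{(y, b). act_hist par y b x' \<and> P y b} \<subseteq> Sigma X A" using act_hist_X[OF _ x'] by auto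
  moreover have "finite (Sigma X A)" using finX finA by auto
  ultimately show ?thesis by (rule finite_subset)
qed

lemma rpf_self: "x \<in> X \<Longrightarrow> real_plan_from par \<mu> x x a' = \<mu> x a'"
proof -
  assume x: "x \<in> X"
  have e: "{(y, b). act_hist par y b x \<and> in_hist par x y} = {}"
  proof (rule ccontr)
    assume "{(y, b). act_hist par y b x \<and> in_hist par x y} \<noteq> {}"
    then obtain y b where yb: "act_hist par y b x" "in_hist par x y" by blast
    have y: "y \<in> X" "h y < h x" using act_hist_X[OF yb(1) x] by auto
    have "h x \<le> h y" using in_hist_X[OF yb(2) y(1)] by simp
    then show False using y by simp
  qed
  show ?thesis unfolding real_plan_from_def e by simp
qed

lemma pairs_child:
  assumes c: "c \<in> ch x a" and x': "x' \<in> S c"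
  shows "{(y, b). act_hist par y b x' \<and> in_hist par x y}
       = insert (x, a) {(y, b). act_hist par y b x' \<and> in_hist par c y}"
    and "(x, a) \<notin> {(y, b). act_hist par y b x' \<and> in_hist par c y}"
proof -
  have cx: "c \<in> X" "par c = Some (x, a)" using c by (auto simp: ch_def)
  have x'X: "x' \<in> X" "in_hist par c x'" using x' by (auto simp: S_def)
  have xX: "x \<in> X" and hc: "h c = h x + 1" using parD[OF cx] by auto
  have xc: "in_hist par x c" using in_hist_par[OF cx(2)] .
  have axa: "act_hist par x a x'" using act_hist_iff cx(2) x'X(2) by blast
  show "(x, a) \<notin> {(y, b). act_hist par y b x' \<and> in_hist par c y}"
  proof
    assume "(x, a) \<in> {(y, b). act_hist par y b x' \<and> in_hist par c y}"
    then have "in_hist par c x" by simp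
    then have "h c \<le> h x" using in_hist_X[OF _ xX] by simp
    then show False using hc by simp
  qed
  show "{(y, b). act_hist par y b x' \<and> in_hist par x y}
       = insert (x, a) {(y, b). act_hist par y b x' \<and> in_hist par c y}"
  proof (rule set_eqI, rule iffI)
    fix p assume "p \<in> {(y, b). act_hist par y b x' \<and> in_hist par x y}"
    then obtain y b where p: "p = (y, b)" "act_hist par y b x'" "in_hist par x y" by blast
    have yX: "y \<in> X" using act_hist_X[OF p(2) x'X(1)] by simp
    from in_hist_cases[OF p(3)] show "p \<in> insert (x, a) {(y, b). act_hist par y b x' \<and> in_hist par c y}"
    proof
      assume "x = y"
      then have "b = a" using act_unique[OF _ axa x'X(1)] p(2) by simp
      then show ?thesis using p \<open>x = y\<close> by simp
    next
      assume "\<exists>a0. act_hist par x a0 y"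
      then obtain a0 c0 where c0: "par c0 = Some (x, a0)" "in_hist par c0 y" using act_hist_iff by blast
      obtain c1 where c1: "par c1 = Some (y, b)" "in_hist par c1 x'" using act_hist_iff p(2) by blast
      have "in_hist par y c1" using in_hist_par[OF c1(1)] .
      then have "in_hist par y x'" using in_hist_trans[OF c1(2)] by simp
      then have c0x': "in_hist par c0 x'" using in_hist_trans[OF _ c0(2)] by simp
      have "c0 \<in> X" using in_hist_X[OF c0x' x'X(1)] by simp
      then have "h c0 = h x + 1" using parD[OF _ c0(1)] by simp
      then have "c0 = c" using anc_unique[OF c0x' x'X(1) x'X(2)] hc by simp
      then show ?thesis using p c0(2) by simp
    qed
  next
    fix p assume "p \<in> insert (x, a) {(y, b). act_hist par y b x' \<and> in_hist par c y}"
    then consider "p = (x, a)" | y b where "p = (y, b)" "act_hist par y b x'" "in_hist par c y" by blast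
    then show "p \<in> {(y, b). act_hist par y b x' \<and> in_hist par x y}"
    proof cases
      case 1 then show ?thesis using axa in_hist.refl[of par x] by simp
    next
      case 2 then show ?thesis using in_hist_trans[OF 2(3) xc] by simp
    qed
  qed
qed

lemma rpf_child: "c \<in> ch x a \<Longrightarrow> x' \<in> S c \<Longrightarrow>
   real_plan_from par \<mu> x x' a' = \<mu> x a * real_plan_from par \<mu> c x' a'"
proof -
  assume c: "c \<in> ch x a" and x': "x' \<in> S c"
  have x'X: "x' \<in> X" using x' by (simp add: S_def)
  have fin: "finite {(y, b). act_hist par y b x' \<and> in_hist par c y}" by (rule fin_pairs[OF x'X])
  show ?thesis unfolding real_plan_from_def pairs_child(1)[OF c x']
    using prod.insert[OF fin pairs_child(2)[OF c x'], of "\<lambda>(y, b). \<mu> y b"] by simp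
qed

lemma rp_root: "r \<in> R \<Longrightarrow> x' \<in> S r \<Longrightarrow> real_plan par \<mu> x' a' = real_plan_from par \<mu> r x' a'"
proof -
  assume r: "r \<in> R" and x': "x' \<in> S r"
  have x'X: "x' \<in> X" "in_hist par r x'" using x' by (auto simp: S_def)
  have "{(y, b). act_hist par y b x'} = {(y, b). act_hist par y b x' \<and> in_hist par r y}"
  proof (rule set_eqI, rule iffI)
    fix p assume "p \<in> {(y, b). act_hist par y b x'}"
    then obtain y b where p: "p = (y, b)" "act_hist par y b x'" by blast
    have yX: "y \<in> X" using act_hist_X[OF p(2) x'X(1)] by simp
    obtain r' where r': "r' \<in> R" "in_hist par r' y" using root_exists[OF yX] by blast
    obtain c1 where c1: "par c1 = Some (y, b)" "in_hist par c1 x'" using act_hist_iff p(2) by blast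
    have "in_hist par y x'" using in_hist_trans[OF c1(2) in_hist_par[OF c1(1)]] .
    then have "in_hist par r' x'" using in_hist_trans[OF _ r'(2)] by simp
    moreover have "h r' = h r" using r r' by (simp add: R_def)
    ultimately have "r' = r" using anc_unique[OF _ x'X(1) x'X(2)] by simp
    then show "p \<in> {(y, b). act_hist par y b x' \<and> in_hist par r y}" using p r' by simp
  qed auto
  then show ?thesis unfolding real_plan_def real_plan_from_def by simp
qed


definition Fm where
  "Fm ms m x = (\<Sum>y\<in>S x. \<Sum>a'\<in>A y. real_plan_from par m x y a' / real_plan_from par ms x y a')"

lemma F_rec: "x \<in> X \<Longrightarrow> Fm ms m x = (\<Sum>a\<in>A x. (m x a / ms x a) * (1 + (\<Sum>c\<in>ch x a. Fm ms m c)))"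
proof -
  assume x: "x \<in> X"
  let ?f = "\<lambda>y. \<Sum>a'\<in>A y. real_plan_from par m x y a' / real_plan_from par ms x y a'"
  have f0: "?f x = (\<Sum>a\<in>A x. m x a / ms x a)" using rpf_self[OF x] by simp
  have fc: "(\<Sum>y\<in>S c. ?f y) = (m x a / ms x a) * Fm ms m c" if c: "c \<in> ch x a" for a c
  proof -
    have "(\<Sum>y\<in>S c. ?f y) = (\<Sum>y\<in>S c. \<Sum>a'\<in>A y. (m x a / ms x a) *
          (real_plan_from par m c y a' / real_plan_from par ms c y a'))"
      by (intro sum.cong HOL.refl) (simp_all add: rpf_child[OF c])
    also have "\<dots> = (m x a / ms x a) * Fm ms m c"
      unfolding Fm_def by (simp add: sum_distrib_left)
    finally show ?thesis .
  qed
  have "Fm ms m x = ?f x + (\<Sum>a\<in>A x. \<Sum>c\<in>ch x a. \<Sum>y\<in>S c. ?f y)"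
    unfolding Fm_def by (rule sum_S[OF x])
  also have "\<dots> = (\<Sum>a\<in>A x. m x a / ms x a) + (\<Sum>a\<in>A x. (m x a / ms x a) * (\<Sum>c\<in>ch x a. Fm ms m c))"
    unfolding f0 by (simp add: fc sum_distrib_left)
  also have "\<dots> = (\<Sum>a\<in>A x. (m x a / ms x a) * (1 + (\<Sum>c\<in>ch x a. Fm ms m c)))"
    by (simp add: sum.distrib distrib_left)
  finally show ?thesis .
qed

lemma kappa_at_F: "kappa_at X A par ms x = (SUP m\<in>{m. is_policy X A m}. Fm ms m x)"
  unfolding kappa_at_def Fm_def S_def ..

lemma kappa_F: "kappa X A par ms = (SUP m\<in>{m. is_policy X A m}. \<Sum>r\<in>R. Fm ms m r)"
  unfolding kappa_def
proof (rule SUP_cong[OF HOL.refl])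
  fix m
  show "(\<Sum>x\<in>X. \<Sum>a\<in>A x. real_plan par m x a / real_plan par ms x a) = (\<Sum>r\<in>R. Fm ms m r)"
    unfolding sum_roots[of "\<lambda>x. \<Sum>a\<in>A x. real_plan par m x a / real_plan par ms x a"] Fm_def
    by (intro sum.cong HOL.refl) (simp add: rp_root)
qed


lemma SUP_attained:
  assumes "m0 \<in> P" "\<And>m. m \<in> P \<Longrightarrow> f m \<le> f m0"
  shows "(SUP m\<in>P. f m) = (f m0 :: real)"
  using assms by (intro cSup_eq_maximum) auto

end

locale gsp = gs +
  fixes ms
  assumes pos: "positive_policy X A ms"
begin

lemma ms_pos: "x \<in> X \<Longrightarrow> a \<in> A x \<Longrightarrow> ms x a > 0" using pos by (simp add: positive_policy_def)
lemma ms_pol: "is_policy X A ms" using pos by (simp add: positive_policy_def)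

definition g where "g x a = (1 + (\<Sum>c\<in>ch x a. kappa_at X A par ms c)) / ms x a"
definition M where "M x = Max (g x ` A x)"
definition amax where "amax x = (SOME a. a \<in> A x \<and> g x a = M x)"
definition opt where "opt x a = (if a = amax x then 1 else 0::real)"

lemma amax: "x \<in> X \<Longrightarrow> amax x \<in> A x \<and> g x (amax x) = M x"
proof -
  assume x: "x \<in> X"
  have "M x \<in> g x ` A x" unfolding M_def by (rule Max_in) (use finA[OF x] neA[OF x] in auto)
  then have "\<exists>a. a \<in> A x \<and> g x a = M x" by auto
  then show ?thesis unfolding amax_def by (rule someI_ex)
qed

lemma g_le: "x \<in> X \<Longrightarrow> a \<in> A x \<Longrightarrow> g x a \<le> M x"
  unfolding M_def by (rule Max_ge) (use finA in auto)

lemma opt_policy: "is_policy X A opt"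
  unfolding is_policy_def opt_def using amax finA by (auto simp: sum.delta')

lemma conv: "x \<in> X \<Longrightarrow> is_policy X A m \<Longrightarrow> (\<Sum>a\<in>A x. m x a * g x a) \<le> M x"
proof -
  assume x: "x \<in> X" and m: "is_policy X A m"
  have "(\<Sum>a\<in>A x. m x a * g x a) \<le> (\<Sum>a\<in>A x. m x a * M x)"
    using m x g_le by (intro sum_mono mult_left_mono) (auto simp: is_policy_def)
  also have "\<dots> = M x" using m x by (simp add: is_policy_def sum_distrib_right[symmetric])
  finally show ?thesis .
qed

lemma kappa_from: "x \<in> X \<Longrightarrow> (\<And>m. is_policy X A m \<Longrightarrow> Fm ms m x \<le> M x) \<Longrightarrow> Fm ms opt x = M x
    \<Longrightarrow> kappa_at X A par ms x = M x"
  unfolding kappa_at_F using opt_policy by (subst SUP_attained[of opt]) auto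

lemma ch_less: "x \<in> X \<Longrightarrow> c \<in> ch x a \<Longrightarrow> H - h c < H - h x"
proof -
  assume "x \<in> X" "c \<in> ch x a"
  then have "c \<in> X" "h c = h x + 1" using ch_X ch_h by auto
  then show ?thesis using hle[of c] by simp
qed

lemma main: "x \<in> X \<Longrightarrow> (\<forall>m. is_policy X A m \<longrightarrow> Fm ms m x \<le> M x) \<and> Fm ms opt x = M x"
proof (induction "H - h x" arbitrary: x rule: less_induct)
  case less
  have x: "x \<in> X" by fact
  have IH: "(\<forall>m. is_policy X A m \<longrightarrow> Fm ms m c \<le> M c) \<and> Fm ms opt c = M c" if c: "c \<in> ch x a" for c a
    using less.hyps[OF ch_less[OF x c]] ch_X[OF c] by blast
  have kc: "kappa_at X A par ms c = M c" if c: "c \<in> ch x a" for c a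
    using kappa_from[of c] IH[OF c] ch_X[OF c] by blast
  have eq: "(m x a / ms x a) * (1 + (\<Sum>c\<in>ch x a. kappa_at X A par ms c)) = m x a * g x a" for m a
    by (simp add: g_def)
  have A1: "Fm ms m x \<le> M x" if m: "is_policy X A m" for m
  proof -
    have "Fm ms m x = (\<Sum>a\<in>A x. (m x a / ms x a) * (1 + (\<Sum>c\<in>ch x a. Fm ms m c)))" by (rule F_rec[OF x])
    also have "\<dots> \<le> (\<Sum>a\<in>A x. (m x a / ms x a) * (1 + (\<Sum>c\<in>ch x a. kappa_at X A par ms c)))"
    proof (rule sum_mono, rule mult_left_mono)
      fix a assume a: "a \<in> A x"
      have "(\<Sum>c\<in>ch x a. Fm ms m c) \<le> (\<Sum>c\<in>ch x a. kappa_at X A par ms c)"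
        using IH kc m by (intro sum_mono) auto
      then show "1 + (\<Sum>c\<in>ch x a. Fm ms m c) \<le> 1 + (\<Sum>c\<in>ch x a. kappa_at X A par ms c)" by simp
      show "0 \<le> m x a / ms x a" using m x a ms_pos[OF x a] by (simp add: is_policy_def)
    qed
    also have "\<dots> = (\<Sum>a\<in>A x. m x a * g x a)" using eq by simp
    also have "\<dots> \<le> M x" by (rule conv[OF x m])
    finally show ?thesis .
  qed
  have "Fm ms opt x = (\<Sum>a\<in>A x. (opt x a / ms x a) * (1 + (\<Sum>c\<in>ch x a. Fm ms opt c)))" by (rule F_rec[OF x])
  also have "\<dots> = (\<Sum>a\<in>A x. (opt x a / ms x a) * (1 + (\<Sum>c\<in>ch x a. kappa_at X A par ms c)))"
    using IH kc by (intro sum.cong HOL.refl arg_cong2[where f="(*)"] arg_cong2[where f="(+)"] sum.cong) auto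
  also have "\<dots> = (\<Sum>a\<in>A x. opt x a * g x a)" using eq by simp
  also have "\<dots> = (\<Sum>a\<in>A x. if a = amax x then g x a else 0)" by (intro sum.cong HOL.refl) (simp add: opt_def)
  also have "\<dots> = g x (amax x)" using amax[OF x] finA[OF x] by (simp add: sum.delta')
  also have "\<dots> = M x" using amax[OF x] by simp
  finally show ?case using A1 by blast
qed

lemma kappa_M: "x \<in> X \<Longrightarrow> kappa_at X A par ms x = M x"
  using main kappa_from by blast

lemma partA: "x \<in> X \<Longrightarrow> kappa_at X A par ms x =
   Max ((\<lambda>a. (1 + (\<Sum>x'\<in>{x'\<in>X. directly_follows par x' x a}. kappa_at X A par ms x')) / ms x a) ` A x)"
proof -
  assume x: "x \<in> X"
  have "{x'\<in>X. directly_follows par x' x a} = ch x a" for a by (auto simp: ch_def directly_follows_def)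
  then show ?thesis using kappa_M[OF x] unfolding M_def g_def by simp
qed

lemma partB: "kappa X A par ms = (\<Sum>x\<in>{x\<in>X. h x = 1}. kappa_at X A par ms x)"
proof -
  have RX: "r \<in> R \<Longrightarrow> r \<in> X" for r by (simp add: R_def)
  have "kappa X A par ms = (\<Sum>r\<in>R. Fm ms opt r)"
    unfolding kappa_F
  proof (rule SUP_attained)
    show "opt \<in> {m. is_policy X A m}" using opt_policy by simp
    fix m assume "m \<in> {m. is_policy X A m}"
    then show "(\<Sum>r\<in>R. Fm ms m r) \<le> (\<Sum>r\<in>R. Fm ms opt r)"
      using main RX by (intro sum_mono) auto
  qed
  also have "\<dots> = (\<Sum>r\<in>R. kappa_at X A par ms r)"
    using main kappa_M RX by (intro sum.cong HOL.refl) auto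
  finally show ?thesis by (simp add: R_def)
qed

lemma partC: "x \<in> X \<Longrightarrow> kappa_at X A par ms x \<ge> real (A_tau X A par x)"
proof (induction "H - h x" arbitrary: x rule: less_induct)
  case less
  have x: "x \<in> X" by fact
  have IH: "kappa_at X A par ms c \<ge> real (A_tau X A par c)" if c: "c \<in> ch x a" for c a
    using ch_X[OF c] by (intro less.hyps[OF ch_less[OF x c]]) simp
  have "real (A_tau X A par x) = (\<Sum>a\<in>A x. 1 + (\<Sum>c\<in>ch x a. real (A_tau X A par c)))"
    by (subst A_tau_def) (simp add: A_tau_act_rec)
  also have "\<dots> \<le> (\<Sum>a\<in>A x. 1 + (\<Sum>c\<in>ch x a. kappa_at X A par ms c))"
    using IH by (intro sum_mono add_left_mono) auto
  also have "\<dots> = (\<Sum>a\<in>A x. ms x a * g x a)"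
  proof (intro sum.cong HOL.refl)
    fix a assume a: "a \<in> A x"
    then have "ms x a \<noteq> 0" using ms_pos[OF x a] by simp
    then show "1 + (\<Sum>c\<in>ch x a. kappa_at X A par ms c) = ms x a * g x a" by (simp add: g_def)
  qed
  also have "\<dots> \<le> M x" by (rule conv[OF x ms_pol])
  also have "\<dots> = kappa_at X A par ms x" using kappa_M[OF x] by simp
  finally show ?case .
qed

end


context gs
begin

lemma A_tau_pos: "x \<in> X \<Longrightarrow> A_tau X A par x > 0"
proof -
  assume x: "x \<in> X"
  obtain a where a: "a \<in> A x" using neA[OF x] by blast
  have "A_tau_act X A par x a > 0" by (simp add: A_tau_act_def)
  moreover have "A_tau_act X A par x a \<le> A_tau X A par x"
    unfolding A_tau_def using finA[OF x] a by (intro member_le_sum) auto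
  ultimately show ?thesis by simp
qed

lemma balanced_pos: "positive_policy X A (balanced_policy X A par)"
  unfolding positive_policy_def is_policy_def
proof (intro conjI ballI)
  fix x a assume x: "x \<in> X" and a: "a \<in> A x"
  show "0 < balanced_policy X A par x a"
  proof -
    have "A_tau_act X A par x a > 0" by (simp add: A_tau_act_def)
    then show ?thesis unfolding balanced_policy_def using A_tau_pos[OF x] by (intro divide_pos_pos) simp_all
  qed
  then show "0 \<le> balanced_policy X A par x a" by simp
next
  fix x assume x: "x \<in> X"
  have "(\<Sum>a\<in>A x. balanced_policy X A par x a) = (\<Sum>a\<in>A x. real (A_tau_act X A par x a)) / real (A_tau X A par x)"
    unfolding balanced_policy_def by (simp add: sum_divide_distrib)
  also have "\<dots> = 1" using A_tau_pos[OF x] by (simp add: A_tau_def flip: of_nat_sum)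
  finally show "(\<Sum>a\<in>A x. balanced_policy X A par x a) = 1" .
qed

lemma gsp_bal: "gsp X H h A par (balanced_policy X A par)"
  by (rule gsp.intro[OF gs_axioms]) (simp add: gsp_axioms_def balanced_pos)

lemma balanced_kappa: "x \<in> X \<Longrightarrow> kappa_at X A par (balanced_policy X A par) x = real (A_tau X A par x)"
proof (induction "H - h x" arbitrary: x rule: less_induct)
  case less
  interpret b: gsp X H h A par "balanced_policy X A par" by (rule gsp_bal)
  have x: "x \<in> X" by fact
  have IH: "kappa_at X A par (balanced_policy X A par) c = real (A_tau X A par c)" if c: "c \<in> ch x a" for c a
    using ch_X[OF c] by (intro less.hyps[OF b.ch_less[OF x c]]) simp
  have ga: "b.g x a = real (A_tau X A par x)" if a: "a \<in> A x" for a
  proof -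
    have "b.g x a = (1 + (\<Sum>c\<in>ch x a. real (A_tau X A par c))) / balanced_policy X A par x a"
      unfolding b.g_def using IH by simp
    also have "\<dots> = real (A_tau_act X A par x a) / balanced_policy X A par x a"
      by (simp add: A_tau_act_rec)
    also have "\<dots> = real (A_tau X A par x)"
    proof -
      have "A_tau_act X A par x a > 0" by (simp add: A_tau_act_def)
      then show ?thesis unfolding balanced_policy_def by simp
    qed
    finally show ?thesis .
  qed
  have "b.g x ` A x = {real (A_tau X A par x)}" using ga neA[OF x] by auto
  then show ?case using b.kappa_M[OF x] unfolding b.M_def by simp
qed

end


theorem mainTheorem10:
  fixes X :: "'x set" and H :: nat and h :: "'x \<Rightarrow> nat" and A :: "'x \<Rightarrow> 'a set"
    and par :: "'x \<Rightarrow> ('x \<times> 'a) option" and \<mu>s :: "'x \<Rightarrow> 'a \<Rightarrow> real"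
  assumes G: "game_structure X H h A par"
    and pos: "positive_policy X A \<mu>s"
  shows "(\<forall>x\<in>X. kappa_at X A par \<mu>s x =
            Max ((\<lambda>a. (1 + (\<Sum>x'\<in>{x'\<in>X. directly_follows par x' x a}. kappa_at X A par \<mu>s x'))
                       / \<mu>s x a) ` A x))
       \<and> kappa X A par \<mu>s = (\<Sum>x\<in>{x\<in>X. h x = 1}. kappa_at X A par \<mu>s x)
       \<and> (\<forall>x\<in>X. kappa_at X A par \<mu>s x \<ge> real (A_tau X A par x))
       \<and> (\<forall>x\<in>X. kappa_at X A par (balanced_policy X A par) x = real (A_tau X A par x))
       \<and> kappa X A par (balanced_policy X A par) = real (total_actions X A)"
proof -
  interpret gs X H h A par by (rule gs.intro[OF G])
  interpret s: gsp X H h A par \<mu>s by (rule gsp.intro[OF gs_axioms]) (simp add: gsp_axioms_def pos)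
  interpret b: gsp X H h A par "balanced_policy X A par" by (rule gsp_bal)
  have d: "kappa X A par (balanced_policy X A par) = real (total_actions X A)"
  proof -
    have "kappa X A par (balanced_policy X A par) = (\<Sum>x\<in>R. kappa_at X A par (balanced_policy X A par) x)"
      using b.partB by (simp add: R_def)
    also have "\<dots> = (\<Sum>x\<in>R. real (A_tau X A par x))"
      using balanced_kappa by (intro sum.cong HOL.refl) (simp add: R_def)
    also have "\<dots> = real (total_actions X A)" by (simp add: total_T)
    finally show ?thesis .
  qed
  show ?thesis using s.partA s.partB s.partC balanced_kappa d by blast
qed

end
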